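(* Let $(A,[\cdot,\cdot]_1,\circ_1)$ be a Malcev-Poisson algebra and let $(A^*,[\cdot,\cdot]_2,\circ_2)$ be a Malcev-Poisson algebra structure on the dual space $A^*$. Then $(A\oplus A^*,A,A^* )$ is a standard Manin triple of Malcev-Poisson algebras if and only if $(A,A^*,\mathrm{ad}_A^*,-L^*,\mathrm{ad}_{A^*}^*,-\mathcal{L}_{A^*}^* )$ is a matched pair of Malcev-Poisson algebras.
   Context: All vector spaces are finite-dimensional over an algebraically closed field $\mathbb{K}$ of characteristic $0$. A Malcev algebra is a vector space with an antisymmetric bilinear bracket satisfying $J(x,y,[x,z])=[J(x,y,z),x]$, where $J(x,y,z)=[[x,y],z]+[[z,x],y]+[[y,z],x]$. A Malcev-Poisson algebra $(A,[\cdot,\cdot],\circ)$: a Malcev bracket and a commutative associative product $\circ$ with $[x,y\circ z]=[x,y]\circ z+y\circ[x,z]$. Representations: of a Malcev algebra, a linear $\varrho:A\to\mathrm{End}(V)$ with $\varrho([[x,y],z])=\varrho(z)\varrho(y)\varrho(x)-\varrho(y)\varrho(x)\varrho(z)+\varrho(x)\varrho([y,z])+\varrho([x,z])\varrho(y)$; of a commutative associative algebra, $\mu$ with $\mu(x\circ y)=\mu(x)\mu(y)$; of a Malcev-Poisson algebra, a pair $(\varrho,\mu)$ of these with $\varrho(x\circ y)=\mu(y)\varrho(x)+\mu(x)\varrho(y)$ and $\mu([x,y])=\varrho(x)\mu(y)-\mu(y)\varrho(x)$. Notation: for $\theta:A\to\mathrm{End}(V)$, $\theta^*:A\to\mathrm{End}(V^*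 )$ is $\langle\theta^*(x)\xi,v\rangle=-\langle\xi,\theta(x)v\rangle$. $\mathrm{ad}(x)y=[x,y]_1$, $L(x)y=x\circ_1y$ on $A$; $\mathrm{ad}_A^*=\mathrm{ad}^*$, $L^*$ are their duals (maps $A\to\mathrm{End}(A^* )$); similarly $\mathrm{ad}_{A^*}^*$, $\mathcal{L}_{A^*}^*:A^*\to\mathrm{End}(A)$ are the duals of $\xi\mapsto[\xi,\cdot]_2$, $\xi\mapsto\xi\circ_2\cdot$ (with $A^{**}=A$), i.e. $\langle \mathrm{ad}_{A^*}^*(\xi)x,\eta\rangle=-\langle x,[\xi,\eta]_2\rangle$, $\langle\mathcal{L}_{A^*}^*(\xi)x,\eta\rangle=-\langle x,\xi\circ_2\eta\rangle$. Matched pair of Malcev-Poisson algebras $(A_1,A_2,\varrho_1,\mu_1,\varrho_2,\mu_2)$ ($\varrho_1,\mu_1:A_1\to\mathrm{End}(A_2)$, $\varrho_2,\mu_2:A_2\to\mathrm{End}(A_1)$): (i) $\mu_1,\mu_2$ are associative representations with $\mu_1(x_1)(x_2\circ_2y_2)=(\mu_1(x_1)x_2)\circ_2y_2+\mu_1(\mu_2(x_2)x_1)y_2$ and $\mu_2(x_2)(x_1\circ_1y_1)=(\mu_2(x_2)x_1)\circ_1y_1+\mu_2(\mu_1(x_1)x_2)y_1$; (ii) $\varrho_1,\varrho_2$ are Malcev representations such that the bracket $[x_1+x_2,y_1+y_2]=[x_1,y_1]_1+\varrho_2(x_2)y_1-\varrho_2(y_2)x_1+[x_2,y_2]_2+\varrho_1(x_1)y_2-\varrho_1(y_1)x_2$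 on $A_1\oplus A_2$ is a Malcev bracket (matched pair of Malcev algebras); (iii) $(A_2,\varrho_1,\mu_1)$, $(A_1,\varrho_2,\mu_2)$ are Malcev-Poisson representations; (iv) for all $x_i,y_i\in A_i$: $\varrho_2(x_2)(x_1\circ_1y_1)=(\varrho_2(x_2)x_1)\circ_1y_1+x_1\circ_1(\varrho_2(x_2)y_1)-\mu_2(\varrho_1(x_1)x_2)y_1-\mu_2(\varrho_1(y_1)x_2)x_1$; $\varrho_1(x_1)(x_2\circ_2y_2)=(\varrho_1(x_1)x_2)\circ_2y_2+x_2\circ_2(\varrho_1(x_1)y_2)-\mu_1(\varrho_2(x_2)x_1)y_2-\mu_1(\varrho_2(y_2)x_1)x_2$; $[x_1,\mu_2(x_2)y_1]_1-\varrho_2(\mu_1(y_1)x_2)x_1=\mu_2(\varrho_1(x_1)x_2)y_1-(\varrho_2(x_2)x_1)\circ_1y_1+\mu_2(x_2)[x_1,y_1]_1$; $[x_2,\mu_1(x_1)y_2]_2-\varrho_1(\mu_2(y_2)x_1)x_2=\mu_1(\varrho_2(x_2)x_1)y_2-(\varrho_1(x_1)x_2)\circ_2y_2+\mu_1(x_1)[x_2,y_2]_2$. A standard Manin triple of Malcev-Poisson algebras $(A\oplus A^*,A,A^* )$ means: a Malcev-Poisson algebra structure on $A\oplus A^*$ for which $(A,[\cdot,\cdot]_1,\circ_1)$ and $(A^*,[\cdot,\cdot]_2,\circ_2)$ are Malcev-Poisson subalgebras and the bilinear form $\omega_d(x+\xi,y+\eta)=\langle x,\eta\rangle+\langle\xi,y\rangle$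 is invariant: $\omega_d(u\circ v,w)=\omega_d(u,v\circ w)$ and $\omega_d([u,v],w)=\omega_d(u,[v,w])$ for all $u,v,w\in A\oplus A^*$. *)

theory Defs
  imports "HOL-Analysis.Finite_Cartesian_Product" "HOL-Library.Product_Plus"
    "HOL-Computational_Algebra.Polynomial"
begin

(* Ground field: algebraically closed (of characteristic 0 via the class field_char_0). *)
definition alg_closed_field :: "'k::field itself \<Rightarrow> bool" where
  "alg_closed_field _ \<longleftrightarrow> (\<forall>p::'k poly. degree p \<ge> 1 \<longrightarrow> (\<exists>x. poly p x = 0))"

(* linearity w.r.t. given scalar multiplications *)
definition lin :: "('k \<Rightarrow> 'a \<Rightarrow> 'a::plus) \<Rightarrow> ('k \<Rightarrow> 'b \<Rightarrow> 'b::plus) \<Rightarrow> ('a \<Rightarrow> 'b) \<Rightarrow> bool" where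
  "lin s t f \<longleftrightarrow> (\<forall>x y. f (x + y) = f x + f y) \<and> (\<forall>c x. f (s c x) = t c (f x))"

definition bilin :: "('k \<Rightarrow> 'a \<Rightarrow> 'a::plus) \<Rightarrow> ('a \<Rightarrow> 'a \<Rightarrow> 'a) \<Rightarrow> bool" where
  "bilin s B \<longleftrightarrow> (\<forall>x. lin s s (B x)) \<and> (\<forall>y. lin s s (\<lambda>x. B x y))"

definition jac :: "('a::ab_group_add \<Rightarrow> 'a \<Rightarrow> 'a) \<Rightarrow> 'a \<Rightarrow> 'a \<Rightarrow> 'a \<Rightarrow> 'a" where
  "jac br x y z = br (br x y) z + br (br z x) y + br (br y z) x"

(* antisymmetric bracket satisfying the Malcev identity *)
definition malcev :: "('a::ab_group_add \<Rightarrow> 'a \<Rightarrow> 'a) \<Rightarrow> bool" where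
  "malcev br \<longleftrightarrow> (\<forall>x y. br x y = - br y x) \<and>
     (\<forall>x y z. jac br x y (br x z) = br (jac br x y z) x)"

definition comm_assoc :: "('a \<Rightarrow> 'a \<Rightarrow> 'a) \<Rightarrow> bool" where
  "comm_assoc m \<longleftrightarrow> (\<forall>x y. m x y = m y x) \<and> (\<forall>x y z. m (m x y) z = m x (m y z))"

(* Malcev-Poisson algebra (bilinear operations) *)
definition malcev_poisson :: "('k \<Rightarrow> 'a \<Rightarrow> 'a) \<Rightarrow> ('a::ab_group_add \<Rightarrow> 'a \<Rightarrow> 'a) \<Rightarrow> ('a \<Rightarrow> 'a \<Rightarrow> 'a) \<Rightarrow> bool" where
  "malcev_poisson s br m \<longleftrightarrow> bilin s br \<and> bilin s m \<and> malcev br \<and> comm_assoc m \<and>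
     (\<forall>x y z. br x (m y z) = m (br x y) z + m y (br x z))"

(* a linear map A \<rightarrow> End(V) *)
definition rep_linear :: "('k \<Rightarrow> 'a \<Rightarrow> 'a::plus) \<Rightarrow> ('k \<Rightarrow> 'v \<Rightarrow> 'v::plus) \<Rightarrow> ('a \<Rightarrow> 'v \<Rightarrow> 'v) \<Rightarrow> bool" where
  "rep_linear sA sV r \<longleftrightarrow> (\<forall>x. lin sV sV (r x)) \<and> (\<forall>v. lin sA sV (\<lambda>x. r x v))"

definition malcev_rep :: "('k \<Rightarrow> 'a \<Rightarrow> 'a::plus) \<Rightarrow> ('k \<Rightarrow> 'v \<Rightarrow> 'v::ab_group_add) \<Rightarrow>
    ('a \<Rightarrow> 'a \<Rightarrow> 'a) \<Rightarrow> ('a \<Rightarrow> 'v \<Rightarrow> 'v) \<Rightarrow> bool" where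
  "malcev_rep sA sV br r \<longleftrightarrow> rep_linear sA sV r \<and>
     (\<forall>x y z v. r (br (br x y) z) v =
        r z (r y (r x v)) - r y (r x (r z v)) + r x (r (br y z) v) + r (br x z) (r y v))"

definition assoc_rep :: "('k \<Rightarrow> 'a \<Rightarrow> 'a::plus) \<Rightarrow> ('k \<Rightarrow> 'v \<Rightarrow> 'v::plus) \<Rightarrow>
    ('a \<Rightarrow> 'a \<Rightarrow> 'a) \<Rightarrow> ('a \<Rightarrow> 'v \<Rightarrow> 'v) \<Rightarrow> bool" where
  "assoc_rep sA sV m \<mu> \<longleftrightarrow> rep_linear sA sV \<mu> \<and> (\<forall>x y v. \<mu> (m x y) v = \<mu> x (\<mu> y v))"

definition mp_rep :: "('k \<Rightarrow> 'a \<Rightarrow> 'a::plus) \<Rightarrow> ('k \<Rightarrow> 'v \<Rightarrow> 'v::ab_group_add) \<Rightarrow>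
    ('a \<Rightarrow> 'a \<Rightarrow> 'a) \<Rightarrow> ('a \<Rightarrow> 'a \<Rightarrow> 'a) \<Rightarrow> ('a \<Rightarrow> 'v \<Rightarrow> 'v) \<Rightarrow> ('a \<Rightarrow> 'v \<Rightarrow> 'v) \<Rightarrow> bool" where
  "mp_rep sA sV br m r \<mu> \<longleftrightarrow> malcev_rep sA sV br r \<and> assoc_rep sA sV m \<mu> \<and>
     (\<forall>x y v. r (m x y) v = \<mu> y (r x v) + \<mu> x (r y v)) \<and>
     (\<forall>x y v. \<mu> (br x y) v = r x (\<mu> y v) - \<mu> y (r x v))"

(* the bracket on A1 \<oplus> A2 determined by a pair of representations *)
fun mp_bracket :: "('a::ab_group_add \<Rightarrow> 'a \<Rightarrow> 'a) \<Rightarrow> ('b::ab_group_add \<Rightarrow> 'b \<Rightarrow> 'b) \<Rightarrow>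
    ('a \<Rightarrow> 'b \<Rightarrow> 'b) \<Rightarrow> ('b \<Rightarrow> 'a \<Rightarrow> 'a) \<Rightarrow> 'a \<times> 'b \<Rightarrow> 'a \<times> 'b \<Rightarrow> 'a \<times> 'b" where
  "mp_bracket br1 br2 r1 r2 (x1, x2) (y1, y2) =
     (br1 x1 y1 + r2 x2 y1 - r2 y2 x1, br2 x2 y2 + r1 x1 y2 - r1 y1 x2)"

definition matched_pair :: "('k \<Rightarrow> 'a \<Rightarrow> 'a) \<Rightarrow> ('k \<Rightarrow> 'b \<Rightarrow> 'b) \<Rightarrow>
    ('a::ab_group_add \<Rightarrow> 'a \<Rightarrow> 'a) \<Rightarrow> ('a \<Rightarrow> 'a \<Rightarrow> 'a) \<Rightarrow>
    ('b::ab_group_add \<Rightarrow> 'b \<Rightarrow> 'b) \<Rightarrow> ('b \<Rightarrow> 'b \<Rightarrow> 'b) \<Rightarrow>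
    ('a \<Rightarrow> 'b \<Rightarrow> 'b) \<Rightarrow> ('a \<Rightarrow> 'b \<Rightarrow> 'b) \<Rightarrow> ('b \<Rightarrow> 'a \<Rightarrow> 'a) \<Rightarrow> ('b \<Rightarrow> 'a \<Rightarrow> 'a) \<Rightarrow> bool" where
  "matched_pair s1 s2 br1 m1 br2 m2 r1 \<mu>1 r2 \<mu>2 \<longleftrightarrow>
     \<comment> \<open>(i)\<close>
     assoc_rep s1 s2 m1 \<mu>1 \<and> assoc_rep s2 s1 m2 \<mu>2 \<and>
     (\<forall>x1 x2 y2. \<mu>1 x1 (m2 x2 y2) = m2 (\<mu>1 x1 x2) y2 + \<mu>1 (\<mu>2 x2 x1) y2) \<and>
     (\<forall>x2 x1 y1. \<mu>2 x2 (m1 x1 y1) = m1 (\<mu>2 x2 x1) y1 + \<mu>2 (\<mu>1 x1 x2) y1) \<and>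
     \<comment> \<open>(ii)\<close>
     malcev_rep s1 s2 br1 r1 \<and> malcev_rep s2 s1 br2 r2 \<and>
     malcev (mp_bracket br1 br2 r1 r2) \<and>
     \<comment> \<open>(iii)\<close>
     mp_rep s1 s2 br1 m1 r1 \<mu>1 \<and> mp_rep s2 s1 br2 m2 r2 \<mu>2 \<and>
     \<comment> \<open>(iv)\<close>
     (\<forall>x1 y1 x2. r2 x2 (m1 x1 y1) = m1 (r2 x2 x1) y1 + m1 x1 (r2 x2 y1)
          - \<mu>2 (r1 x1 x2) y1 - \<mu>2 (r1 y1 x2) x1) \<and>
     (\<forall>x2 y2 x1. r1 x1 (m2 x2 y2) = m2 (r1 x1 x2) y2 + m2 x2 (r1 x1 y2)
          - \<mu>1 (r2 x2 x1) y2 - \<mu>1 (r2 y2 x1) x2) \<and>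
     (\<forall>x1 y1 x2. br1 x1 (\<mu>2 x2 y1) - r2 (\<mu>1 y1 x2) x1
          = \<mu>2 (r1 x1 x2) y1 - m1 (r2 x2 x1) y1 + \<mu>2 x2 (br1 x1 y1)) \<and>
     (\<forall>x2 y2 x1. br2 x2 (\<mu>1 x1 y2) - r1 (\<mu>2 y2 x1) x2
          = \<mu>1 (r2 x2 x1) y2 - m2 (r1 x1 x2) y2 + \<mu>1 x1 (br2 x2 y2))"

(* Model: A = 'k^'n (a finite-dimensional space with a chosen basis) and A-dual = 'k^'n,
   with the canonical nondegenerate pairing <x, xi> = sum_i x_i xi_i. *)
definition dpair :: "'k::comm_ring ^ 'n::finite \<Rightarrow> 'k ^ 'n \<Rightarrow> 'k" where
  "dpair u v = (\<Sum>i\<in>UNIV. u $ i * v $ i)"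

(* dual representation theta-dual: <theta-dual(x) xi, v> = - <xi, theta(x) v> *)
definition dual_rep :: "('a \<Rightarrow> 'k::comm_ring ^ 'n::finite \<Rightarrow> 'k ^ 'n) \<Rightarrow> 'a \<Rightarrow> 'k ^ 'n \<Rightarrow> 'k ^ 'n" where
  "dual_rep \<theta> x \<xi> = (THE \<eta>. \<forall>v. dpair \<eta> v = - dpair \<xi> (\<theta> x v))"

(* scalar multiplication on A \<oplus> A-dual *)
definition dsc :: "'k::times \<Rightarrow> ('k ^ 'n) \<times> ('k ^ 'n) \<Rightarrow> ('k ^ 'n) \<times> ('k ^ 'n)" where
  "dsc c u = (c *s fst u, c *s snd u)"

(* the bilinear form omega_d on A \<oplus> A-dual *)
definition omega_d :: "('k::comm_ring ^ 'n::finite) \<times> ('k ^ 'n) \<Rightarrow> ('k ^ 'n) \<times> ('k ^ 'n) \<Rightarrow> 'k" where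
  "omega_d u w = dpair (fst u) (snd w) + dpair (snd u) (fst w)"

(* standard Manin triple (A \<oplus> A-dual, A, A-dual) of Malcev-Poisson algebras *)
definition std_manin_triple :: "('k::field ^ 'n::finite \<Rightarrow> 'k ^ 'n \<Rightarrow> 'k ^ 'n) \<Rightarrow> ('k ^ 'n \<Rightarrow> 'k ^ 'n \<Rightarrow> 'k ^ 'n) \<Rightarrow>
    ('k ^ 'n \<Rightarrow> 'k ^ 'n \<Rightarrow> 'k ^ 'n) \<Rightarrow> ('k ^ 'n \<Rightarrow> 'k ^ 'n \<Rightarrow> 'k ^ 'n) \<Rightarrow> bool" where
  "std_manin_triple br1 m1 br2 m2 \<longleftrightarrow>
     (\<exists>br m. malcev_poisson dsc br m \<and>
        (\<forall>x y. br (x, 0) (y, 0) = (br1 x y, 0)) \<and> (\<forall>x y. m (x, 0) (y, 0) = (m1 x y, 0)) \<and>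
        (\<forall>\<xi> \<eta>. br (0, \<xi>) (0, \<eta>) = (0, br2 \<xi> \<eta>)) \<and> (\<forall>\<xi> \<eta>. m (0, \<xi>) (0, \<eta>) = (0, m2 \<xi> \<eta>)) \<and>
        (\<forall>u v w. omega_d (m u v) w = omega_d u (m v w)) \<and>
        (\<forall>u v w. omega_d (br u v) w = omega_d u (br v w)))"

end

theory Submission
  imports Defs
begin

(* ---- part P1 ---- *)
lemma add_zero_gen0:
  fixes f :: "'a::ab_group_add \<Rightarrow> 'b::ab_group_add"
  assumes "\<forall>x y. f (x + y) = f x + f y"
  shows "f 0 = 0"
proof -
  have "f 0 = f (0 + 0)" by simp
  also have "\<dots> = f 0 + f 0" using assms by blast
  finally show "f 0 = 0" by simp
qed

lemma add_zero_gen1: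
  fixes f :: "'a::ab_group_add \<Rightarrow> 'b::ab_group_add"
  assumes "\<forall>x y. f (x + y) = f x + f y"
  shows "f (- x) = - f x"
proof -
  have "f x + f (- x) = f (x + - x)" using assms by metis
  also have "\<dots> = 0" using add_zero_gen0[OF assms] by simp
  finally show ?thesis by (simp add: add_eq_0_iff)
qed

lemma add_zero_gen2:
  fixes f :: "'a::ab_group_add \<Rightarrow> 'b::ab_group_add"
  assumes "\<forall>x y. f (x + y) = f x + f y"
  shows "f (x - y) = f x - f y"
proof -
  have "f (x - y) = f (x + - y)" by simp
  also have "\<dots> = f x + f (- y)" using assms by blast
  finally show ?thesis using add_zero_gen1[OF assms, of y] by simp
qed

lemmas add_zero_gen = add_zero_gen0 add_zero_gen1 add_zero_gen2

lemma add_sum_gen: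
  fixes f :: "'a::ab_group_add \<Rightarrow> 'b::ab_group_add"
  assumes "\<forall>x y. f (x + y) = f x + f y"
  shows "f (sum g S) = (\<Sum>i\<in>S. f (g i))"
proof (induction S rule: infinite_finite_induct)
  case (infinite A) then show ?case using add_zero_gen(1)[OF assms] by simp
next
  case empty then show ?case using add_zero_gen(1)[OF assms] by simp
next
  case (insert x F) then show ?case using assms by simp
qed

lemma dpair_sym: "dpair u v = dpair v u"
  unfolding dpair_def by (simp add: mult.commute)

lemma dpair_add1: "dpair (u + w) v = dpair u v + dpair w v"
  unfolding dpair_def by (simp add: distrib_right sum.distrib)
lemma dpair_add2: "dpair v (u + w) = dpair v u + dpair v w"
  unfolding dpair_def by (simp add: distrib_left sum.distrib)
lemma dpair_neg1: "dpair (- u) v = - dpair u v"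
  unfolding dpair_def by (simp add: sum_negf)
lemma dpair_neg2: "dpair v (- u) = - dpair v u"
  unfolding dpair_def by (simp add: sum_negf)
lemma dpair_diff1: "dpair (u - w) v = dpair u v - dpair w v"
  unfolding dpair_def by (simp add: left_diff_distrib sum_subtractf)
lemma dpair_diff2: "dpair v (u - w) = dpair v u - dpair v w"
  unfolding dpair_def by (simp add: right_diff_distrib sum_subtractf)
lemma dpair_zero1: "dpair 0 v = 0"
  unfolding dpair_def by simp
lemma dpair_zero2: "dpair v 0 = 0"
  unfolding dpair_def by simp
lemma dpair_scale1: "dpair (c *s u) v = c * dpair u v"
  unfolding dpair_def by (simp add: sum_distrib_left mult.assoc)
lemma dpair_scale2: "dpair v (c *s u) = c * dpair v u"
  unfolding dpair_def by (simp add: sum_distrib_left algebra_simps)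

lemmas dpair_simps = dpair_add1 dpair_add2 dpair_neg1 dpair_neg2 dpair_diff1 dpair_diff2
  dpair_zero1 dpair_zero2 dpair_scale1 dpair_scale2

lemma dpair_axis: "dpair (u::'k::comm_ring_1^'n::finite) (axis i 1) = u $ i"
proof -
  have "dpair u (axis i 1) = (\<Sum>j\<in>UNIV. if j = i then u $ j else 0)"
    unfolding dpair_def axis_def by (intro sum.cong) auto
  also have "\<dots> = u $ i" by simp
  finally show ?thesis .
qed

lemma dpair_ext:
  fixes a b :: "'k::comm_ring_1^'n::finite"
  shows "(\<And>v. dpair a v = dpair b v) \<Longrightarrow> a = b"
  unfolding vec_eq_iff by (metis dpair_axis)

lemma vec_axis_expand: "(v::'k::comm_ring_1^'n::finite) = (\<Sum>j\<in>UNIV. (v $ j) *s axis j 1)"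
proof -
  have "(\<Sum>j\<in>UNIV. (v $ j) *s axis j 1) $ i = v $ i" for i
  proof -
    have "(\<Sum>j\<in>UNIV. (v $ j) *s axis j 1) $ i = (\<Sum>j\<in>UNIV. if j = i then v $ j else 0)"
      unfolding sum_component by (intro sum.cong) (auto simp: axis_def)
    also have "\<dots> = v $ i" by simp
    finally show ?thesis .
  qed
  then show ?thesis by (simp add: vec_eq_iff)
qed

lemma dual_rep_char:
  fixes \<theta> :: "'a \<Rightarrow> 'k::field ^ 'n::finite \<Rightarrow> 'k ^ 'n"
  assumes "lin (*s) (*s) (\<theta> x)"
  shows "dpair (dual_rep \<theta> x \<xi>) v = - dpair \<xi> (\<theta> x v)"
proof -
  have ad: "\<forall>a b. \<theta> x (a + b) = \<theta> x a + \<theta> x b" and sc: "\<And>c a. \<theta> x (c *s a) = c *s \<theta> x a"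
    using assms unfolding lin_def by auto
  define \<eta> where "\<eta> = (\<chi> j. - dpair \<xi> (\<theta> x (axis j 1)))"
  have P: "\<forall>v. dpair \<eta> v = - dpair \<xi> (\<theta> x v)"
  proof
    fix v
    have tv: "\<theta> x v = (\<Sum>j\<in>UNIV. (v $ j) *s \<theta> x (axis j 1))"
      by (subst vec_axis_expand[of v]) (simp add: add_sum_gen[OF ad] sc)
    have "dpair \<xi> (\<theta> x v) = (\<Sum>j\<in>UNIV. v $ j * dpair \<xi> (\<theta> x (axis j 1)))"
    proof -
      have a2: "\<forall>a b. dpair \<xi> (a + b) = dpair \<xi> a + dpair \<xi> b" by (simp add: dpair_add2)
      show ?thesis using tv by (simp add: add_sum_gen[OF a2] dpair_scale2)
    qed
    then show "dpair \<eta> v = - dpair \<xi> (\<theta> x v)"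
      by (simp add: \<eta>_def dpair_def sum_negf algebra_simps)
  qed
  have "dual_rep \<theta> x \<xi> = \<eta>"
    unfolding dual_rep_def
  proof (rule the_equality)
    show "\<forall>v. dpair \<eta> v = - dpair \<xi> (\<theta> x v)" by (rule P)
    fix e assume "\<forall>v. dpair e v = - dpair \<xi> (\<theta> x v)"
    then show "e = \<eta>" using P by (intro dpair_ext) simp
  qed
  then show ?thesis using P by simp
qed

(* ---- part P3 ---- *)
lemma jac_add:
  fixes br :: "'a::ab_group_add \<Rightarrow> 'a \<Rightarrow> 'a"
  assumes add1: "\<And>x y z. br (x+y) z = br x z + br y z"
   and add2: "\<And>x y z. br x (y+z) = br x y + br x z"
  shows "jac br (a+b) y z = jac br a y z + jac br b y z"
    "jac br y z (a+b) = jac br y z a + jac br y z b"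
  unfolding jac_def by (simp_all add: add1 add2 algebra_simps)

lemma malcev_lin:
  fixes br :: "'a::ab_group_add \<Rightarrow> 'a \<Rightarrow> 'a"
  assumes add1: "\<And>x y z. br (x+y) z = br x z + br y z"
   and add2: "\<And>x y z. br x (y+z) = br x y + br x z"
   and mal: "malcev br"
  shows "jac br x y (br w z) + jac br w y (br x z) = br (jac br x y z) w + br (jac br w y z) x"
proof -
  have m: "\<And>x y z. jac br x y (br x z) = br (jac br x y z) x" using mal unfolding malcev_def by blast
  have "jac br (x+w) y (br (x+w) z) = br (jac br (x+w) y z) (x+w)" by (rule m)
  then have "jac br x y (br x z) + jac br x y (br w z) + (jac br w y (br x z) + jac br w y (br w z))
     = br (jac br x y z) x + br (jac br x y z) w + (br (jac br w y z) x + br (jac br w y z) w)"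
    by (simp add: jac_add[OF add1 add2] add1 add2 algebra_simps)
  then show ?thesis using m[of x y z] m[of w y z] by (simp add: algebra_simps)
qed

lemma malcev_ad_rep:
  fixes br :: "'a::ab_group_add \<Rightarrow> 'a \<Rightarrow> 'a"
  assumes add1: "\<And>x y z. br (x+y) z = br x z + br y z"
   and add2: "\<And>x y z. br x (y+z) = br x y + br x z"
   and mal: "malcev br"
   and tf: "\<And>u::'a. u + u = 0 \<Longrightarrow> u = 0"
  shows "br (br (br x y) z) v = br z (br y (br x v)) - br y (br x (br z v)) + br x (br (br y z) v) + br (br x z) (br y v)"
proof -
  have anti: "\<And>a b. br a b = - br b a" using mal unfolding malcev_def by blast
  have n1: "\<And>a b. br (- a) b = - br a b"
    using add_zero_gen1[of "\<lambda>a. br a b" for b] add1 by blast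
  have n2: "\<And>a b. br a (- b) = - br a b"
    using add_zero_gen1[of "br a" for a] add2 by blast
  have gr: "br v x = - (br x v)"
    "br v y = - (br y v)"
    "br v z = - (br z v)"
    "br y x = - (br x y)"
    "br z x = - (br x z)"
    "br z y = - (br y z)"
    "br (br x v) y = - (br y (br x v))"
    "br (br x v) z = - (br z (br x v))"
    "br (br x y) v = - (br v (br x y))"
    "br (br x y) z = - (br z (br x y))"
    "br (br x z) v = - (br v (br x z))"
    "br (br x z) y = - (br y (br x z))"
    "br (br y v) x = - (br x (br y v))"
    "br (br y v) z = - (br z (br y v))"
    "br (br y z) v = - (br v (br y z))"
    "br (br y z) x = - (br x (br y z))"
    "br (br z v) x = - (br x (br z v))"
    "br (br z v) y = - (br y (br z v))"
    "br (br v (br x y)) z = - (br z (br v (br x y)))"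
    "br (br v (br x z)) y = - (br y (br v (br x z)))"
    "br (br v (br y z)) x = - (br x (br v (br y z)))"
    "br (br x (br y v)) z = - (br z (br x (br y v)))"
    "br (br x (br y z)) v = - (br v (br x (br y z)))"
    "br (br x (br z v)) y = - (br y (br x (br z v)))"
    "br (br y v) (br x z) = - (br (br x z) (br y v))"
    "br (br y z) (br x v) = - (br (br x v) (br y z))"
    "br (br y (br x v)) z = - (br z (br y (br x v)))"
    "br (br y (br x z)) v = - (br v (br y (br x z)))"
    "br (br y (br z v)) x = - (br x (br y (br z v)))"
    "br (br z v) (br x y) = - (br (br x y) (br z v))"
    "br (br z (br x v)) y = - (br y (br z (br x v)))"
    "br (br z (br x y)) v = - (br v (br z (br x y)))"
    "br (br z (br y v)) x = - (br x (br z (br y v)))"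
    by (simp_all only: anti[symmetric])
  have M1: "jac br x z (br y v) + jac br y z (br x v) = br (jac br x z v) y + br (jac br y z v) x"
    by (rule malcev_lin[OF add1 add2 mal])
  have M2: "jac br x v (br z y) + jac br z v (br x y) = br (jac br x v y) z + br (jac br z v y) x"
    by (rule malcev_lin[OF add1 add2 mal])
  have M3: "jac br x y (br v z) + jac br v y (br x z) = br (jac br x y z) v + br (jac br v y z) x"
    by (rule malcev_lin[OF add1 add2 mal])
  define D where "D = br (br (br x y) z) v - (br z (br y (br x v)) - br y (br x (br z v)) + br x (br (br y z) v) + br (br x z) (br y v))"
  have key: "D + D = - ((jac br x z (br y v) + jac br y z (br x v) - (br (jac br x z v) y + br (jac br y z v) x))
     - (jac br x v (br z y) + jac br z v (br x y) - (br (jac br x v y) z + br (jac br z v y) x))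
     + (jac br x y (br v z) + jac br v y (br x z) - (br (jac br x y z) v + br (jac br v y z) x)))"
    unfolding D_def jac_def
    by (simp only: add1 add2 n1 n2 diff_conv_add_uminus minus_add_distrib minus_minus gr) (simp add: algebra_simps)
  have "D + D = 0" using key M1 M2 M3 by simp
  then have "D = 0" by (rule tf)
  then show ?thesis unfolding D_def by simp
qed

(* ---- part P4 ---- *)
lemma dual_lin:
  fixes \<theta> :: "'k::field ^ 'n::finite \<Rightarrow> 'k ^ 'n \<Rightarrow> 'k ^ 'n"
  assumes l1: "\<And>x. lin (*s) (*s) (\<theta> x)" and l2: "\<And>v. lin (*s) (*s) (\<lambda>x. \<theta> x v)"
  shows "dual_rep \<theta> (x + y) \<xi> = dual_rep \<theta> x \<xi> + dual_rep \<theta> y \<xi>"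
    "dual_rep \<theta> x (\<xi> + \<eta>) = dual_rep \<theta> x \<xi> + dual_rep \<theta> x \<eta>"
    "dual_rep \<theta> (c *s x) \<xi> = c *s dual_rep \<theta> x \<xi>"
    "dual_rep \<theta> x (c *s \<xi>) = c *s dual_rep \<theta> x \<xi>"
proof -
  have ch: "\<And>x \<xi> v. dpair (dual_rep \<theta> x \<xi>) v = - dpair \<xi> (\<theta> x v)" by (rule dual_rep_char[OF l1])
  have a2: "\<And>v. \<theta> (x + y) v = \<theta> x v + \<theta> y v" "\<And>v. \<theta> (c *s x) v = c *s \<theta> x v"
    using l2 unfolding lin_def by auto
  show "dual_rep \<theta> (x + y) \<xi> = dual_rep \<theta> x \<xi> + dual_rep \<theta> y \<xi>"
    by (rule dpair_ext) (simp add: ch dpair_simps a2)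
  show "dual_rep \<theta> x (\<xi> + \<eta>) = dual_rep \<theta> x \<xi> + dual_rep \<theta> x \<eta>"
    by (rule dpair_ext) (simp add: ch dpair_simps)
  show "dual_rep \<theta> (c *s x) \<xi> = c *s dual_rep \<theta> x \<xi>"
    by (rule dpair_ext) (simp add: ch dpair_simps a2)
  show "dual_rep \<theta> x (c *s \<xi>) = c *s dual_rep \<theta> x \<xi>"
    by (rule dpair_ext) (simp add: ch dpair_simps)
qed

lemma mp_facts:
  assumes "malcev_poisson s br m"
  shows "\<And>x y z. br (x + y) z = br x z + br y z" "\<And>x y z. br x (y + z) = br x y + br x z"
    "\<And>c x y. br (s c x) y = s c (br x y)" "\<And>c x y. br x (s c y) = s c (br x y)"
    "\<And>x y z. m (x + y) z = m x z + m y z" "\<And>x y z. m x (y + z) = m x y + m x z"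
    "\<And>c x y. m (s c x) y = s c (m x y)" "\<And>c x y. m x (s c y) = s c (m x y)"
    "\<And>x y. br x y = - br y x" "malcev br" "\<And>x y. m x y = m y x" "\<And>x y z. m (m x y) z = m x (m y z)"
    "\<And>x y z. br x (m y z) = m (br x y) z + m y (br x z)"
    "\<And>x. lin s s (br x)" "\<And>y. lin s s (\<lambda>x. br x y)" "\<And>x. lin s s (m x)" "\<And>y. lin s s (\<lambda>x. m x y)"
proof -
  have b1: "bilin s br" and b2: "bilin s m" and mc: "malcev br" and ca: "comm_assoc m"
    and lb: "\<forall>x y z. br x (m y z) = m (br x y) z + m y (br x z)"
    using assms unfolding malcev_poisson_def by blast+
  show "\<And>x. lin s s (br x)" "\<And>y. lin s s (\<lambda>x. br x y)" using b1 unfolding bilin_def by blast+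
  show "\<And>x. lin s s (m x)" "\<And>y. lin s s (\<lambda>x. m x y)" using b2 unfolding bilin_def by blast+
  show "malcev br" by (rule mc)
  show "\<And>x y. br x y = - br y x" using mc unfolding malcev_def by blast
  show "\<And>x y. m x y = m y x" "\<And>x y z. m (m x y) z = m x (m y z)" using ca unfolding comm_assoc_def by blast+
  show "\<And>x y z. br x (m y z) = m (br x y) z + m y (br x z)" using lb by blast
  show "\<And>x y z. br (x + y) z = br x z + br y z" "\<And>x y z. br x (y + z) = br x y + br x z"
    "\<And>c x y. br (s c x) y = s c (br x y)" "\<And>c x y. br x (s c y) = s c (br x y)"
    using b1 unfolding bilin_def lin_def by simp_all
  show "\<And>x y z. m (x + y) z = m x z + m y z" "\<And>x y z. m x (y + z) = m x y + m x z"
    "\<And>c x y. m (s c x) y = s c (m x y)" "\<And>c x y. m x (s c y) = s c (m x y)"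
    using b2 unfolding bilin_def lin_def by simp_all
qed

(* ---- part P5 ---- *)
lemma biadd_facts:
  fixes f :: "'a::ab_group_add \<Rightarrow> 'b::ab_group_add \<Rightarrow> 'c::ab_group_add"
  assumes a1: "\<And>x y z. f (x+y) z = f x z + f y z" and a2: "\<And>x y z. f x (y+z) = f x y + f x z"
  shows "f 0 z = 0" "f x 0 = 0" "f (-x) z = - f x z" "f x (-z) = - f x z"
    "f (x - y) z = f x z - f y z" "f x (w - z) = f x w - f x z"
proof -
  have b1: "\<forall>x y. (\<lambda>x. f x z) (x + y) = (\<lambda>x. f x z) x + (\<lambda>x. f x z) y" for z using a1 by simp
  have b2: "\<forall>y z. f x (y + z) = f x y + f x z" for x using a2 by simp
  show "f 0 z = 0" using add_zero_gen0[OF b1] by simp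
  show "f x 0 = 0" using add_zero_gen0[OF b2] by simp
  show "f (-x) z = - f x z" using add_zero_gen1[OF b1] by simp
  show "f x (-z) = - f x z" using add_zero_gen1[OF b2] by simp
  show "f (x - y) z = f x z - f y z" using add_zero_gen2[OF b1] by simp
  show "f x (w - z) = f x w - f x z" using add_zero_gen2[OF b2] by simp
qed

locale MP2 =
  fixes br1 m1 br2 m2 :: "'k::field_char_0 ^ 'n::finite \<Rightarrow> 'k ^ 'n \<Rightarrow> 'k ^ 'n"
  assumes A1: "malcev_poisson (*s) br1 m1" and A2: "malcev_poisson (*s) br2 m2"
begin

lemmas f1 = mp_facts[OF A1]
lemmas f2 = mp_facts[OF A2]

definition r1 :: "'k^'n \<Rightarrow> 'k^'n \<Rightarrow> 'k^'n" where "r1 = dual_rep br1"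
definition mu1 :: "'k^'n \<Rightarrow> 'k^'n \<Rightarrow> 'k^'n" where "mu1 = (\<lambda>x \<xi>. - dual_rep m1 x \<xi>)"
definition r2 :: "'k^'n \<Rightarrow> 'k^'n \<Rightarrow> 'k^'n" where "r2 = dual_rep br2"
definition mu2 :: "'k^'n \<Rightarrow> 'k^'n \<Rightarrow> 'k^'n" where "mu2 = (\<lambda>\<xi> x. - dual_rep m2 \<xi> x)"

lemma r1_char: "dpair (r1 x \<xi>) v = - dpair \<xi> (br1 x v)"
  unfolding r1_def by (rule dual_rep_char[OF f1(14)])
lemma mu1_char: "dpair (mu1 x \<xi>) v = dpair \<xi> (m1 x v)"
  unfolding mu1_def by (simp add: dpair_neg1 dual_rep_char[OF f1(16)])
lemma r2_char: "dpair (r2 \<xi> x) \<eta> = - dpair x (br2 \<xi> \<eta>)"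
  unfolding r2_def by (rule dual_rep_char[OF f2(14)])
lemma mu2_char: "dpair (mu2 \<xi> x) \<eta> = dpair x (m2 \<xi> \<eta>)"
  unfolding mu2_def by (simp add: dpair_neg1 dual_rep_char[OF f2(16)])

lemmas chars = r1_char mu1_char r2_char mu2_char

lemmas dl1 = dual_lin[OF f1(14) f1(15)]
lemmas dl2 = dual_lin[OF f1(16) f1(17)]
lemmas dl3 = dual_lin[OF f2(14) f2(15)]
lemmas dl4 = dual_lin[OF f2(16) f2(17)]

lemma r1_lin: "r1 (x + y) \<xi> = r1 x \<xi> + r1 y \<xi>" "r1 x (\<xi> + \<eta>) = r1 x \<xi> + r1 x \<eta>"
   "r1 (c *s x) \<xi> = c *s r1 x \<xi>" "r1 x (c *s \<xi>) = c *s r1 x \<xi>"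
  unfolding r1_def by (simp_all add: dl1)
lemma mu1_lin: "mu1 (x + y) \<xi> = mu1 x \<xi> + mu1 y \<xi>" "mu1 x (\<xi> + \<eta>) = mu1 x \<xi> + mu1 x \<eta>"
   "mu1 (c *s x) \<xi> = c *s mu1 x \<xi>" "mu1 x (c *s \<xi>) = c *s mu1 x \<xi>"
  unfolding mu1_def by (simp_all add: dl2 vector_smult_rneg)
lemma r2_lin: "r2 (x + y) \<xi> = r2 x \<xi> + r2 y \<xi>" "r2 x (\<xi> + \<eta>) = r2 x \<xi> + r2 x \<eta>"
   "r2 (c *s x) \<xi> = c *s r2 x \<xi>" "r2 x (c *s \<xi>) = c *s r2 x \<xi>"
  unfolding r2_def by (simp_all add: dl3)
lemma mu2_lin: "mu2 (x + y) \<xi> = mu2 x \<xi> + mu2 y \<xi>" "mu2 x (\<xi> + \<eta>) = mu2 x \<xi> + mu2 x \<eta>"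
   "mu2 (c *s x) \<xi> = c *s mu2 x \<xi>" "mu2 x (c *s \<xi>) = c *s mu2 x \<xi>"
  unfolding mu2_def by (simp_all add: dl4 vector_smult_rneg)

lemmas bz_br1 = biadd_facts[of br1, OF f1(1) f1(2)]
lemmas bz_m1 = biadd_facts[of m1, OF f1(5) f1(6)]
lemmas bz_br2 = biadd_facts[of br2, OF f2(1) f2(2)]
lemmas bz_m2 = biadd_facts[of m2, OF f2(5) f2(6)]
lemmas bz_r1 = biadd_facts[of r1, OF r1_lin(1) r1_lin(2)]
lemmas bz_mu1 = biadd_facts[of mu1, OF mu1_lin(1) mu1_lin(2)]
lemmas bz_r2 = biadd_facts[of r2, OF r2_lin(1) r2_lin(2)]
lemmas bz_mu2 = biadd_facts[of mu2, OF mu2_lin(1) mu2_lin(2)]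

lemmas add_simps = f1(1,2,5,6) f2(1,2,5,6) r1_lin(1,2) mu1_lin(1,2) r2_lin(1,2) mu2_lin(1,2)
lemmas sc_simps = f1(3,4,7,8) f2(3,4,7,8) r1_lin(3,4) mu1_lin(3,4) r2_lin(3,4) mu2_lin(3,4)
lemmas z_simps = bz_br1 bz_m1 bz_br2 bz_m2 bz_r1 bz_mu1 bz_r2 bz_mu2

definition D :: "('k^'n) \<times> ('k^'n) \<Rightarrow> ('k^'n) \<times> ('k^'n) \<Rightarrow> ('k^'n) \<times> ('k^'n)"
  where "D = mp_bracket br1 br2 r1 r2"
definition P :: "('k^'n) \<times> ('k^'n) \<Rightarrow> ('k^'n) \<times> ('k^'n) \<Rightarrow> ('k^'n) \<times> ('k^'n)"
  where "P u w = (m1 (fst u) (fst w) + mu2 (snd u) (fst w) + mu2 (snd w) (fst u),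
                  m2 (snd u) (snd w) + mu1 (fst u) (snd w) + mu1 (fst w) (snd u))"

lemma D_pair: "D (a, b) (c, d) = (br1 a c + r2 b c - r2 d a, br2 b d + r1 a d - r1 c b)"
  unfolding D_def by simp
lemma P_pair: "P (a, b) (c, d) = (m1 a c + mu2 b c + mu2 d a, m2 b d + mu1 a d + mu1 c b)"
  unfolding P_def by simp

lemma D_add: "D (u + u') w = D u w + D u' w" "D w (u + u') = D w u + D w u'"
  by (cases u; cases u'; cases w; simp add: D_pair add_simps algebra_simps)+
lemma P_add: "P (u + u') w = P u w + P u' w" "P w (u + u') = P w u + P w u'"
  by (cases u; cases u'; cases w; simp add: P_pair add_simps algebra_simps)+

lemma D_sc: "D (dsc c u) w = dsc c (D u w)" "D w (dsc c u) = dsc c (D w u)"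
  by (cases u; cases w; simp add: D_pair dsc_def sc_simps vector_add_ldistrib vector_ssub_ldistrib)+
lemma P_sc: "P (dsc c u) w = dsc c (P u w)" "P w (dsc c u) = dsc c (P w u)"
  by (cases u; cases w; simp add: P_pair dsc_def sc_simps vector_add_ldistrib vector_ssub_ldistrib)+

lemma D_bilin: "bilin dsc D"
  unfolding bilin_def lin_def by (simp add: D_add D_sc)
lemma P_bilin: "bilin dsc P"
  unfolding bilin_def lin_def by (simp add: P_add P_sc)

lemma P_comm: "P u w = P w u"
  by (cases u; cases w; simp add: P_pair f1(11) f2(11) algebra_simps)

lemma D_inv: "omega_d (D u v) w = omega_d u (D v w)"
proof (cases u; cases v; cases w)
  fix u1 u2 v1 v2 w1 w2 assume [simp]: "u = (u1, u2)" "v = (v1, v2)" "w = (w1, w2)"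
  show ?thesis
    apply (simp add: omega_d_def D_pair dpair_simps)
    apply (simp add: dpair_sym[of _ "r1 _ _"] dpair_sym[of _ "r2 _ _"] chars)
    apply (simp add: dpair_sym[of u1] dpair_sym[of u2] dpair_sym[of v1] dpair_sym[of v2] f1(9)[of w1] f2(9)[of w2] dpair_simps)
    apply (simp add: f1(9)[of v1 u1] f2(9)[of v2 u2] dpair_simps dpair_sym[of w2] dpair_sym[of w1])
    done
qed

lemma P_inv: "omega_d (P u v) w = omega_d u (P v w)"
proof (cases u; cases v; cases w)
  fix u1 u2 v1 v2 w1 w2 assume [simp]: "u = (u1, u2)" "v = (v1, v2)" "w = (w1, w2)"
  show ?thesis
    apply (simp add: omega_d_def P_pair dpair_simps)
    apply (simp add: dpair_sym[of _ "mu1 _ _"] dpair_sym[of _ "mu2 _ _"] chars)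
    apply (simp add: dpair_sym[of u1] dpair_sym[of u2] dpair_sym[of v1] dpair_sym[of v2] dpair_simps)
    apply (simp add: f1(11)[of v1 u1] f2(11)[of v2 u2] f1(11)[of w1] f2(11)[of w2] dpair_simps dpair_sym[of w2] dpair_sym[of w1])
    done
qed

definition FL where "FL u v w = D u (P v w) - (P (D u v) w + P v (D u w))"
definition FA where "FA u v w = P (P u v) w - P u (P v w)"

lemmas ev = FL_def FA_def D_pair P_pair z_simps


lemma FL111: "FL (x,0) (y,0) (z,0) = (br1 x (m1 y z) - (m1 (br1 x y) z + m1 y (br1 x z)), 0)" by (simp add: ev)
lemma FL112: "FL (x,0) (y,0) (0,z) = (br1 x (mu2 z y) - r2 (mu1 y z) x - (mu2 z (br1 x y) + (mu2 (r1 x z) y - m1 y (r2 z x))), r1 x (mu1 y z) - (mu1 (br1 x y) z + mu1 y (r1 x z)))" by (simp add: ev)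
lemma FL121: "FL (x,0) (0,y) (z,0) = (br1 x (mu2 y z) - r2 (mu1 z y) x - (mu2 (r1 x y) z - m1 (r2 y x) z + mu2 y (br1 x z)), r1 x (mu1 z y) - (mu1 z (r1 x y) + mu1 (br1 x z) y))" by (simp add: ev)
lemma FL122: "FL (x,0) (0,y) (0,z) = (- r2 (m2 y z) x - (- mu2 z (r2 y x) - mu2 y (r2 z x)), r1 x (m2 y z) - (m2 (r1 x y) z - mu1 (r2 y x) z + (m2 y (r1 x z) - mu1 (r2 z x) y)))" by (simp add: ev)
lemma FL211: "FL (0,x) (y,0) (z,0) = (r2 x (m1 y z) - (m1 (r2 x y) z - mu2 (r1 y x) z + (m1 y (r2 x z) - mu2 (r1 z x) y)), - r1 (m1 y z) x - (- mu1 z (r1 y x) - mu1 y (r1 z x)))" by (simp add: ev)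
lemma FL212: "FL (0,x) (y,0) (0,z) = (r2 x (mu2 z y) - (mu2 z (r2 x y) + mu2 (br2 x z) y), br2 x (mu1 y z) - r1 (mu2 z y) x - (mu1 (r2 x y) z - m2 (r1 y x) z + mu1 y (br2 x z)))" by (simp add: ev)
lemma FL221: "FL (0,x) (0,y) (z,0) = (r2 x (mu2 y z) - (mu2 (br2 x y) z + mu2 y (r2 x z)), br2 x (mu1 z y) - r1 (mu2 y z) x - (mu1 z (br2 x y) + (mu1 (r2 x z) y - m2 y (r1 z x))))" by (simp add: ev)
lemma FL222: "FL (0,x) (0,y) (0,z) = (0, br2 x (m2 y z) - (m2 (br2 x y) z + m2 y (br2 x z)))" by (simp add: ev)
lemma FA111: "FA (x,0) (y,0) (z,0) = (m1 (m1 x y) z - m1 x (m1 y z), 0)" by (simp add: ev)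
lemma FA112: "FA (x,0) (y,0) (0,z) = (mu2 z (m1 x y) - (m1 x (mu2 z y) + mu2 (mu1 y z) x), mu1 (m1 x y) z - mu1 x (mu1 y z))" by (simp add: ev)
lemma FA121: "FA (x,0) (0,y) (z,0) = (m1 (mu2 y x) z + mu2 (mu1 x y) z - (m1 x (mu2 y z) + mu2 (mu1 z y) x), mu1 z (mu1 x y) - mu1 x (mu1 z y))" by (simp add: ev)
lemma FA122: "FA (x,0) (0,y) (0,z) = (mu2 z (mu2 y x) - mu2 (m2 y z) x, m2 (mu1 x y) z + mu1 (mu2 y x) z - mu1 x (m2 y z))" by (simp add: ev)
lemma FA211: "FA (0,x) (y,0) (z,0) = (m1 (mu2 x y) z + mu2 (mu1 y x) z - mu2 x (m1 y z), mu1 z (mu1 y x) - mu1 (m1 y z) x)" by (simp add: ev)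
lemma FA212: "FA (0,x) (y,0) (0,z) = (mu2 z (mu2 x y) - mu2 x (mu2 z y), m2 (mu1 y x) z + mu1 (mu2 x y) z - (m2 x (mu1 y z) + mu1 (mu2 z y) x))" by (simp add: ev)
lemma FA221: "FA (0,x) (0,y) (z,0) = (mu2 (m2 x y) z - mu2 x (mu2 y z), mu1 z (m2 x y) - (m2 x (mu1 z y) + mu1 (mu2 y z) x))" by (simp add: ev)
lemma FA222: "FA (0,x) (0,y) (0,z) = (0, m2 (m2 x y) z - m2 x (m2 y z))" by (simp add: ev)

lemma FL_add: "FL (u+u') v w = FL u v w + FL u' v w" "FL u (v+v') w = FL u v w + FL u v' w"
   "FL u v (w+w') = FL u v w + FL u v w'"
  unfolding FL_def by (simp_all add: D_add P_add algebra_simps)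
lemma FA_add: "FA (u+u') v w = FA u v w + FA u' v w" "FA u (v+v') w = FA u v w + FA u v' w"
   "FA u v (w+w') = FA u v w + FA u v w'"
  unfolding FA_def by (simp_all add: P_add algebra_simps)

end

lemma tri_zero:
  fixes F :: "('a::ab_group_add \<times> 'b::ab_group_add) \<Rightarrow> ('a \<times> 'b) \<Rightarrow> ('a \<times> 'b) \<Rightarrow> 'c::ab_group_add"
  assumes a1: "\<And>u u' v w. F (u+u') v w = F u v w + F u' v w"
    and a2: "\<And>u v v' w. F u (v+v') w = F u v w + F u v' w"
    and a3: "\<And>u v w w'. F u v (w+w') = F u v w + F u v w'"
    and z: "\<And>u v w. snd u = 0 \<or> fst u = 0 \<Longrightarrow> snd v = 0 \<or> fst v = 0 \<Longrightarrow> snd w = 0 \<or> fst w = 0 \<Longrightarrow> F u v w = 0"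
  shows "F u v w = 0"
proof -
  have s: "\<And>p::('a\<times>'b). p = (fst p, 0) + (0, snd p)" by simp
  have st1: "F u v w = 0" if "snd v = 0 \<or> fst v = 0" "snd w = 0 \<or> fst w = 0" for u v w
  proof -
    have "F u v w = F (fst u, 0) v w + F (0, snd u) v w" by (subst s[of u]) (rule a1)
    then show ?thesis using z that by simp
  qed
  have st2: "F u v w = 0" if "snd w = 0 \<or> fst w = 0" for u v w
  proof -
    have "F u v w = F u (fst v, 0) w + F u (0, snd v) w" by (subst s[of v]) (rule a2)
    then show ?thesis using st1 that by simp
  qed
  have "F u v w = F u v (fst w, 0) + F u v (0, snd w)" by (subst s[of w]) (rule a3)
  then show ?thesis using st2 by simp
qed

(* ---- part P6 ---- *)
context MP2 begin

lemma FL_sym: "FL u v w = FL u w v"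
  unfolding FL_def by (simp add: P_comm[of v w] P_comm[of "D u v"] P_comm[of v] algebra_simps zero_prod_def)
lemma FA_sym: "FA w v u = - FA u v w"
proof -
  have 1: "P (P w v) u = P u (P w v)" "P w (P v u) = P (P v u) w" by (rule P_comm)+
  have 2: "P w v = P v w" "P v u = P u v" by (rule P_comm)+
  show ?thesis unfolding FA_def unfolding 1 unfolding 2 by simp
qed

lemma replin: "rep_linear (*s) (*s) r1" "rep_linear (*s) (*s) mu1" "rep_linear (*s) (*s) r2" "rep_linear (*s) (*s) mu2"
  unfolding rep_linear_def lin_def by (simp_all add: r1_lin mu1_lin r2_lin mu2_lin)

lemma pure_cases:
  assumes "snd u = 0 \<or> fst u = 0"
  obtains a where "u = (a, 0)" | b where "u = (0, b)"
  using assms by (cases u) auto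

lemma Cfacts:
  assumes mp: "matched_pair (*s) (*s) br1 m1 br2 m2 r1 mu1 r2 mu2"
  shows C1: "\<And>x y v. mu1 (m1 x y) v = mu1 x (mu1 y v)"
    and C2: "\<And>x y v. mu2 (m2 x y) v = mu2 x (mu2 y v)"
    and C3: "\<And>x1 x2 y2. mu1 x1 (m2 x2 y2) = m2 (mu1 x1 x2) y2 + mu1 (mu2 x2 x1) y2"
    and C4: "\<And>x2 x1 y1. mu2 x2 (m1 x1 y1) = m1 (mu2 x2 x1) y1 + mu2 (mu1 x1 x2) y1"
    and C7: "malcev D"
    and C83: "\<And>x y v. r1 (m1 x y) v = mu1 y (r1 x v) + mu1 x (r1 y v)"
    and C84: "\<And>x y v. mu1 (br1 x y) v = r1 x (mu1 y v) - mu1 y (r1 x v)"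
    and C93: "\<And>x y v. r2 (m2 x y) v = mu2 y (r2 x v) + mu2 x (r2 y v)"
    and C94: "\<And>x y v. mu2 (br2 x y) v = r2 x (mu2 y v) - mu2 y (r2 x v)"
    and C10: "\<And>p q t. r2 t (m1 p q) = m1 (r2 t p) q + m1 p (r2 t q)
          - mu2 (r1 p t) q - mu2 (r1 q t) p"
    and C11: "\<And>p q t. r1 t (m2 p q) = m2 (r1 t p) q + m2 p (r1 t q)
          - mu1 (r2 p t) q - mu1 (r2 q t) p"
    and C12: "\<And>p q t. br1 p (mu2 t q) - r2 (mu1 q t) p
          = mu2 (r1 p t) q - m1 (r2 t p) q + mu2 t (br1 p q)"
    and C13: "\<And>p q t. br2 p (mu1 t q) - r1 (mu2 q t) p
          = mu1 (r2 p t) q - m2 (r1 t p) q + mu1 t (br2 p q)"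
  using mp unfolding matched_pair_def mp_rep_def assoc_rep_def D_def by simp_all

lemma L111:
  assumes mp: "matched_pair (*s) (*s) br1 m1 br2 m2 r1 mu1 r2 mu2"
  shows "FL (x,0) (y,0) (z,0) = 0"
  by (simp add: FL111 f1(13) zero_prod_def)
lemma L222:
  assumes mp: "matched_pair (*s) (*s) br1 m1 br2 m2 r1 mu1 r2 mu2"
  shows "FL (0,x) (0,y) (0,z) = 0"
  by (simp add: FL222 f2(13) zero_prod_def)
lemma L112:
  assumes mp: "matched_pair (*s) (*s) br1 m1 br2 m2 r1 mu1 r2 mu2"
  shows "FL (x,0) (y,0) (0,z) = 0"
  using C12[OF mp, where p=x and q=y and t=z] C84[OF mp, of x y z] f1(11)[of y "r2 z x"] by (simp add: FL112 algebra_simps zero_prod_def)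
lemma L122:
  assumes mp: "matched_pair (*s) (*s) br1 m1 br2 m2 r1 mu1 r2 mu2"
  shows "FL (x,0) (0,y) (0,z) = 0"
  using C93[OF mp, of y z x] C11[OF mp, where p=y and q=z and t=x] by (simp add: FL122 algebra_simps zero_prod_def)
lemma L211:
  assumes mp: "matched_pair (*s) (*s) br1 m1 br2 m2 r1 mu1 r2 mu2"
  shows "FL (0,x) (y,0) (z,0) = 0"
  using C10[OF mp, where p=y and q=z and t=x] C83[OF mp, of y z x] by (simp add: FL211 algebra_simps zero_prod_def)
lemma L212:
  assumes mp: "matched_pair (*s) (*s) br1 m1 br2 m2 r1 mu1 r2 mu2"
  shows "FL (0,x) (y,0) (0,z) = 0"
  using C94[OF mp, of x z y] C13[OF mp, where p=x and q=z and t=y] by (simp add: FL212 algebra_simps zero_prod_def)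

lemma A111: "FA (x,0) (y,0) (z,0) = 0" by (simp add: FA111 f1(12) zero_prod_def)
lemma A222: "FA (0,x) (0,y) (0,z) = 0" by (simp add: FA222 f2(12) zero_prod_def)
lemma A112:
  assumes mp: "matched_pair (*s) (*s) br1 m1 br2 m2 r1 mu1 r2 mu2"
  shows "FA (x,0) (y,0) (0,z) = 0"
  using C4[OF mp, of z y x] C1[OF mp, of x y z] f1(11)[of y x] f1(11)[of "mu2 z y" x]
  by (simp add: FA112 algebra_simps zero_prod_def)
lemma A121:
  assumes mp: "matched_pair (*s) (*s) br1 m1 br2 m2 r1 mu1 r2 mu2"
  shows "FA (x,0) (0,y) (z,0) = 0"
  using C4[OF mp, of y x z] C4[OF mp, of y z x] f1(11)[of z x] f1(11)[of "mu2 y z" x]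
    C1[OF mp, of x z y] C1[OF mp, of z x y]
  by (simp add: FA121 algebra_simps zero_prod_def)
lemma A122:
  assumes mp: "matched_pair (*s) (*s) br1 m1 br2 m2 r1 mu1 r2 mu2"
  shows "FA (x,0) (0,y) (0,z) = 0"
  using C2[OF mp, of z y x] f2(11)[of z y] C3[OF mp, of x y z]
  by (simp add: FA122 algebra_simps zero_prod_def)
lemma A212:
  assumes mp: "matched_pair (*s) (*s) br1 m1 br2 m2 r1 mu1 r2 mu2"
  shows "FA (0,x) (y,0) (0,z) = 0"
  using C2[OF mp, of z x y] C2[OF mp, of x z y] f2(11)[of z x] C3[OF mp, of y x z] C3[OF mp, of y z x]
    f2(11)[of "mu1 y z" x]
  by (simp add: FA212 algebra_simps zero_prod_def)

lemma L121:
  assumes mp: "matched_pair (*s) (*s) br1 m1 br2 m2 r1 mu1 r2 mu2"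
  shows "FL (x,0) (0,y) (z,0) = 0"
  by (subst FL_sym) (rule L112[OF mp])
lemma L221:
  assumes mp: "matched_pair (*s) (*s) br1 m1 br2 m2 r1 mu1 r2 mu2"
  shows "FL (0,x) (0,y) (z,0) = 0"
  by (subst FL_sym) (rule L212[OF mp])
lemma A211:
  assumes mp: "matched_pair (*s) (*s) br1 m1 br2 m2 r1 mu1 r2 mu2"
  shows "FA (0,x) (y,0) (z,0) = 0"
  using FA_sym[of "(0,x)" "(y,0)" "(z,0)"] A112[OF mp, of z y x] by simp
lemma A221:
  assumes mp: "matched_pair (*s) (*s) br1 m1 br2 m2 r1 mu1 r2 mu2"
  shows "FA (0,x) (0,y) (z,0) = 0"
  using FA_sym[of "(0,x)" "(0,y)" "(z,0)"] A122[OF mp, of z y x] by simp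

lemma FLz:
  assumes mp: "matched_pair (*s) (*s) br1 m1 br2 m2 r1 mu1 r2 mu2"
  shows "FL u v w = 0"
proof (rule tri_zero[of FL], (rule FL_add)+)
  fix u v w :: "('k^'n) \<times> ('k^'n)"
  assume "snd u = 0 \<or> fst u = 0" "snd v = 0 \<or> fst v = 0" "snd w = 0 \<or> fst w = 0"
  then show "FL u v w = 0"
    by (elim pure_cases) (simp_all add: L111[OF mp] L112[OF mp] L121[OF mp] L122[OF mp]
       L211[OF mp] L212[OF mp] L221[OF mp] L222[OF mp])
qed

lemma FAz:
  assumes mp: "matched_pair (*s) (*s) br1 m1 br2 m2 r1 mu1 r2 mu2"
  shows "FA u v w = 0"
proof (rule tri_zero[of FA], (rule FA_add)+)
  fix u v w :: "('k^'n) \<times> ('k^'n)"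
  assume "snd u = 0 \<or> fst u = 0" "snd v = 0 \<or> fst v = 0" "snd w = 0 \<or> fst w = 0"
  then show "FA u v w = 0"
    by (elim pure_cases) (simp_all add: A111 A112[OF mp] A121[OF mp] A122[OF mp]
       A211[OF mp] A212[OF mp] A221[OF mp] A222)
qed

lemma bwd:
  assumes mp: "matched_pair (*s) (*s) br1 m1 br2 m2 r1 mu1 r2 mu2"
  shows "std_manin_triple br1 m1 br2 m2"
proof -
  have MP: "malcev_poisson dsc D P"
    unfolding malcev_poisson_def comm_assoc_def
  proof (intro conjI allI)
    show "bilin dsc D" by (rule D_bilin)
    show "bilin dsc P" by (rule P_bilin)
    show "malcev D" by (rule C7[OF mp])
    show "P x y = P y x" for x y by (rule P_comm)
    show "P (P x y) z = P x (P y z)" for x y z using FAz[OF mp, of x y z] unfolding FA_def by simp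
    show "D x (P y z) = P (D x y) z + P y (D x z)" for x y z using FLz[OF mp, of x y z] unfolding FL_def by simp
  qed
  show ?thesis
    unfolding std_manin_triple_def
    by (rule exI[of _ D], rule exI[of _ P]) (simp add: MP D_inv P_inv D_pair P_pair z_simps)
qed

end

(* ---- part P8 ---- *)
lemma vec_tf:
  fixes a :: "'k::field_char_0 ^ 'n::finite"
  assumes "a + a = 0" shows "a = 0"
proof -
  have "(1 + 1 :: 'k) *s a = 0" using assms by (simp only: vector_sadd_rdistrib vector_smult_lid)
  then show ?thesis by simp
qed

lemma pair_tf:
  fixes u :: "('k::field_char_0 ^ 'n::finite) \<times> ('k ^ 'n)"
  assumes "u + u = 0" shows "u = 0"
proof (rule prod_eqI)
  have "fst u + fst u = 0" using arg_cong[OF assms, of fst] by (simp only: fst_add fst_zero)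
  then have "fst u = 0" by (rule vec_tf)
  then show "fst u = fst 0" by simp
  have "snd u + snd u = 0" using arg_cong[OF assms, of snd] by (simp only: snd_add snd_zero)
  then have "snd u = 0" by (rule vec_tf)
  then show "snd u = snd 0" by simp
qed

context MP2 begin

lemma MR1: "malcev D \<Longrightarrow> malcev_rep (*s) (*s) br1 r1"
  unfolding malcev_rep_def
proof (intro conjI allI replin)
  fix x y z v
  assume MD: "malcev D"
  have "D (D (D (x,0) (y,0)) (z,0)) (0,v) = D (z,0) (D (y,0) (D (x,0) (0,v))) - D (y,0) (D (x,0) (D (z,0) (0,v)))
     + D (x,0) (D (D (y,0) (z,0)) (0,v)) + D (D (x,0) (z,0)) (D (y,0) (0,v))"
    by (rule malcev_ad_rep[where br=D, OF D_add(1) D_add(2) MD pair_tf])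
  then have "snd (D (D (D (x,0) (y,0)) (z,0)) (0,v)) = snd (D (z,0) (D (y,0) (D (x,0) (0,v))) - D (y,0) (D (x,0) (D (z,0) (0,v)))
     + D (x,0) (D (D (y,0) (z,0)) (0,v)) + D (D (x,0) (z,0)) (D (y,0) (0,v)))" by simp
  then show "r1 (br1 (br1 x y) z) v =
        r1 z (r1 y (r1 x v)) - r1 y (r1 x (r1 z v)) + r1 x (r1 (br1 y z) v) + r1 (br1 x z) (r1 y v)"
    by (simp add: D_pair z_simps)
qed

lemma MR2: "malcev D \<Longrightarrow> malcev_rep (*s) (*s) br2 r2"
  unfolding malcev_rep_def
proof (intro conjI allI replin)
  fix x y z v
  assume MD: "malcev D"
  have "D (D (D (0,x) (0,y)) (0,z)) (v,0) = D (0,z) (D (0,y) (D (0,x) (v,0))) - D (0,y) (D (0,x) (D (0,z) (v,0)))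
     + D (0,x) (D (D (0,y) (0,z)) (v,0)) + D (D (0,x) (0,z)) (D (0,y) (v,0))"
    by (rule malcev_ad_rep[where br=D, OF D_add(1) D_add(2) MD pair_tf])
  then have "fst (D (D (D (0,x) (0,y)) (0,z)) (v,0)) = fst (D (0,z) (D (0,y) (D (0,x) (v,0))) - D (0,y) (D (0,x) (D (0,z) (v,0)))
     + D (0,x) (D (D (0,y) (0,z)) (v,0)) + D (D (0,x) (0,z)) (D (0,y) (v,0)))" by simp
  then show "r2 (br2 (br2 x y) z) v =
        r2 z (r2 y (r2 x v)) - r2 y (r2 x (r2 z v)) + r2 x (r2 (br2 y z) v) + r2 (br2 x z) (r2 y v)"
    by (simp add: D_pair z_simps)
qed

lemma om_0s: "omega_d p (0, \<zeta>) = dpair (fst p) \<zeta>" by (simp add: omega_d_def dpair_simps)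
lemma om_s0: "omega_d p (y, 0) = dpair (snd p) y" by (simp add: omega_d_def dpair_simps)
lemma om_l1: "omega_d (x, 0) q = dpair x (snd q)" by (simp add: omega_d_def dpair_simps)
lemma om_l2: "omega_d (0, \<eta>) q = dpair \<eta> (fst q)" by (simp add: omega_d_def dpair_simps)
lemma om_neg: "omega_d (- p) q = - omega_d p q" by (simp add: omega_d_def dpair_simps)

lemma identify:
  assumes MPd: "malcev_poisson dsc br m"
   and r11: "\<forall>x y. br (x, 0) (y, 0) = (br1 x y, 0)" and m11: "\<forall>x y. m (x, 0) (y, 0) = (m1 x y, 0)"
   and r22: "\<forall>\<xi> \<eta>. br (0, \<xi>) (0, \<eta>) = (0, br2 \<xi> \<eta>)" and m22: "\<forall>\<xi> \<eta>. m (0, \<xi>) (0, \<eta>) = (0, m2 \<xi> \<eta>)"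
   and invm: "\<forall>u v w. omega_d (m u v) w = omega_d u (m v w)"
   and invb: "\<forall>u v w. omega_d (br u v) w = omega_d u (br v w)"
  shows "br = D" "m = P"
proof -
  note F = mp_facts[OF MPd]
  have mixb: "br (x,0) (0,\<eta>) = (- r2 \<eta> x, r1 x \<eta>)" for x \<eta>
  proof (rule prod_eqI)
    show "fst (br (x,0) (0,\<eta>)) = fst (- r2 \<eta> x, r1 x \<eta>)"
    proof (rule dpair_ext)
      fix \<zeta>
      have "dpair (fst (br (x,0) (0,\<eta>))) \<zeta> = omega_d (br (x,0) (0,\<eta>)) (0,\<zeta>)" by (simp add: om_0s)
      also have "\<dots> = omega_d (x,0) (br (0,\<eta>) (0,\<zeta>))" using invb by blast
      also have "\<dots> = dpair x (br2 \<eta> \<zeta>)" using r22 by (simp add: om_l1)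
      finally show "dpair (fst (br (x,0) (0,\<eta>))) \<zeta> = dpair (fst (- r2 \<eta> x, r1 x \<eta>)) \<zeta>"
        by (simp add: dpair_simps r2_char)
    qed
    show "snd (br (x,0) (0,\<eta>)) = snd (- r2 \<eta> x, r1 x \<eta>)"
    proof (rule dpair_ext)
      fix y
      have "dpair (snd (br (x,0) (0,\<eta>))) y = omega_d (br (x,0) (0,\<eta>)) (y,0)" by (simp add: om_s0)
      also have "\<dots> = - omega_d (br (0,\<eta>) (x,0)) (y,0)" by (subst F(9)) (simp add: om_neg)
      also have "\<dots> = - omega_d (0,\<eta>) (br (x,0) (y,0))" using invb by simp
      also have "\<dots> = - dpair \<eta> (br1 x y)" using r11 by (simp add: om_l2)
      finally show "dpair (snd (br (x,0) (0,\<eta>))) y = dpair (snd (- r2 \<eta> x, r1 x \<eta>)) y"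
        by (simp add: r1_char)
    qed
  qed
  have mixm: "m (x,0) (0,\<eta>) = (mu2 \<eta> x, mu1 x \<eta>)" for x \<eta>
  proof (rule prod_eqI)
    show "fst (m (x,0) (0,\<eta>)) = fst (mu2 \<eta> x, mu1 x \<eta>)"
    proof (rule dpair_ext)
      fix \<zeta>
      have "dpair (fst (m (x,0) (0,\<eta>))) \<zeta> = omega_d (m (x,0) (0,\<eta>)) (0,\<zeta>)" by (simp add: om_0s)
      also have "\<dots> = omega_d (x,0) (m (0,\<eta>) (0,\<zeta>))" using invm by blast
      also have "\<dots> = dpair x (m2 \<eta> \<zeta>)" using m22 by (simp add: om_l1)
      finally show "dpair (fst (m (x,0) (0,\<eta>))) \<zeta> = dpair (fst (mu2 \<eta> x, mu1 x \<eta>)) \<zeta>"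
        by (simp add: mu2_char)
    qed
    show "snd (m (x,0) (0,\<eta>)) = snd (mu2 \<eta> x, mu1 x \<eta>)"
    proof (rule dpair_ext)
      fix y
      have "dpair (snd (m (x,0) (0,\<eta>))) y = omega_d (m (x,0) (0,\<eta>)) (y,0)" by (simp add: om_s0)
      also have "\<dots> = omega_d (m (0,\<eta>) (x,0)) (y,0)" by (subst F(11)) (rule refl)
      also have "\<dots> = omega_d (0,\<eta>) (m (x,0) (y,0))" using invm by simp
      also have "\<dots> = dpair \<eta> (m1 x y)" using m11 by (simp add: om_l2)
      finally show "dpair (snd (m (x,0) (0,\<eta>))) y = dpair (snd (mu2 \<eta> x, mu1 x \<eta>)) y"
        by (simp add: mu1_char)
    qed
  qed
  have sp: "\<And>(a::'k^'n) (b::'k^'n). (a, b) = (a, 0) + (0, b)" by simp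
  show "br = D"
  proof (intro ext)
    fix u v :: "('k^'n) \<times> ('k^'n)"
    obtain u1 u2 v1 v2 where uv: "u = (u1, u2)" "v = (v1, v2)" by (cases u, cases v) auto
    have "br u v = br ((u1,0) + (0,u2)) ((v1,0) + (0,v2))" unfolding uv by simp
    also have "\<dots> = br (u1,0) (v1,0) + br (0,u2) (v1,0) + (br (u1,0) (0,v2) + br (0,u2) (0,v2))"
      by (simp only: F(1) F(2))
    also have "\<dots> = D u v"
      using mixb[of v1 u2] r11 r22 by (subst F(9)[of "(0,u2)"]) (simp add: mixb uv D_pair algebra_simps)
    finally show "br u v = D u v" .
  qed
  show "m = P"
  proof (intro ext)
    fix u v :: "('k^'n) \<times> ('k^'n)"
    obtain u1 u2 v1 v2 where uv: "u = (u1, u2)" "v = (v1, v2)" by (cases u, cases v) auto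
    have "m u v = m ((u1,0) + (0,u2)) ((v1,0) + (0,v2))" unfolding uv by simp
    also have "\<dots> = m (u1,0) (v1,0) + m (0,u2) (v1,0) + (m (u1,0) (0,v2) + m (0,u2) (0,v2))"
      by (simp only: F(5) F(6))
    also have "\<dots> = P u v"
      using r11 r22 by (subst F(11)[of "(0,u2)"]) (simp add: mixm m11 m22 uv P_pair algebra_simps)
    finally show "m u v = P u v" .
  qed
qed

lemma fwd:
  assumes MPd: "malcev_poisson dsc br m"
   and r11: "\<forall>x y. br (x, 0) (y, 0) = (br1 x y, 0)" and m11: "\<forall>x y. m (x, 0) (y, 0) = (m1 x y, 0)"
   and r22: "\<forall>\<xi> \<eta>. br (0, \<xi>) (0, \<eta>) = (0, br2 \<xi> \<eta>)" and m22: "\<forall>\<xi> \<eta>. m (0, \<xi>) (0, \<eta>) = (0, m2 \<xi> \<eta>)"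
   and invm: "\<forall>u v w. omega_d (m u v) w = omega_d u (m v w)"
   and invb: "\<forall>u v w. omega_d (br u v) w = omega_d u (br v w)"
  shows "matched_pair (*s) (*s) br1 m1 br2 m2 r1 mu1 r2 mu2"
proof -
  have e: "br = D" "m = P" using identify[OF assms] by blast+
  have MP: "malcev_poisson dsc D P" using MPd e by simp
  note G = mp_facts[OF MP]
  have MD: "malcev D" by (rule G(10))
  have FL0: "FL u v w = 0" for u v w using G(13)[of u v w] unfolding FL_def by simp
  have FA0: "FA u v w = 0" for u v w using G(12)[of u v w] unfolding FA_def by simp
  have C1: "\<forall>x y v. mu1 (m1 x y) v = mu1 x (mu1 y v)"
    using FA0[of "(_,0)" "(_,0)" "(0,_)"] by (simp add: FA112 zero_prod_def)
  have C2: "\<forall>x y v. mu2 (m2 x y) v = mu2 x (mu2 y v)"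
    using FA0[of "(0,_)" "(0,_)" "(_,0)"] by (simp add: FA221 zero_prod_def)
  have C3: "\<forall>x1 x2 y2. mu1 x1 (m2 x2 y2) = m2 (mu1 x1 x2) y2 + mu1 (mu2 x2 x1) y2"
  proof (intro allI)
    fix x1 x2 y2 show "mu1 x1 (m2 x2 y2) = m2 (mu1 x1 x2) y2 + mu1 (mu2 x2 x1) y2"
      using FA0[of "(x1,0)" "(0,x2)" "(0,y2)"] by (simp add: FA122 zero_prod_def algebra_simps)
  qed
  have C4: "\<forall>x2 x1 y1. mu2 x2 (m1 x1 y1) = m1 (mu2 x2 x1) y1 + mu2 (mu1 x1 x2) y1"
  proof (intro allI)
    fix x1 x2 y1 show "mu2 x2 (m1 x1 y1) = m1 (mu2 x2 x1) y1 + mu2 (mu1 x1 x2) y1"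
      using FA0[of "(0,x2)" "(x1,0)" "(y1,0)"] by (simp add: FA211 zero_prod_def algebra_simps)
  qed
  have C83: "\<forall>x y v. r1 (m1 x y) v = mu1 y (r1 x v) + mu1 x (r1 y v)"
  proof (intro allI)
    fix x y v show "r1 (m1 x y) v = mu1 y (r1 x v) + mu1 x (r1 y v)"
      using FL0[of "(0,v)" "(x,0)" "(y,0)"] by (simp add: FL211 zero_prod_def algebra_simps)
  qed
  have C84: "\<forall>x y v. mu1 (br1 x y) v = r1 x (mu1 y v) - mu1 y (r1 x v)"
  proof (intro allI)
    fix x y v show "mu1 (br1 x y) v = r1 x (mu1 y v) - mu1 y (r1 x v)"
      using FL0[of "(x,0)" "(y,0)" "(0,v)"] by (simp add: FL112 zero_prod_def algebra_simps)
  qed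
  have C93: "\<forall>x y v. r2 (m2 x y) v = mu2 y (r2 x v) + mu2 x (r2 y v)"
  proof (intro allI)
    fix x y v show "r2 (m2 x y) v = mu2 y (r2 x v) + mu2 x (r2 y v)"
      using FL0[of "(v,0)" "(0,x)" "(0,y)"] by (simp add: FL122 zero_prod_def algebra_simps)
  qed
  have C94: "\<forall>x y v. mu2 (br2 x y) v = r2 x (mu2 y v) - mu2 y (r2 x v)"
  proof (intro allI)
    fix x y v show "mu2 (br2 x y) v = r2 x (mu2 y v) - mu2 y (r2 x v)"
      using FL0[of "(0,x)" "(0,y)" "(v,0)"] by (simp add: FL221 zero_prod_def algebra_simps)
  qed
  have C10: "\<forall>x1 y1 x2. r2 x2 (m1 x1 y1) = m1 (r2 x2 x1) y1 + m1 x1 (r2 x2 y1)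
          - mu2 (r1 x1 x2) y1 - mu2 (r1 y1 x2) x1"
  proof (intro allI)
    fix x1 y1 x2 show "r2 x2 (m1 x1 y1) = m1 (r2 x2 x1) y1 + m1 x1 (r2 x2 y1)
          - mu2 (r1 x1 x2) y1 - mu2 (r1 y1 x2) x1"
      using FL0[of "(0,x2)" "(x1,0)" "(y1,0)"] by (simp add: FL211 zero_prod_def algebra_simps)
  qed
  have C11: "\<forall>x2 y2 x1. r1 x1 (m2 x2 y2) = m2 (r1 x1 x2) y2 + m2 x2 (r1 x1 y2)
          - mu1 (r2 x2 x1) y2 - mu1 (r2 y2 x1) x2"
  proof (intro allI)
    fix x2 y2 x1 show "r1 x1 (m2 x2 y2) = m2 (r1 x1 x2) y2 + m2 x2 (r1 x1 y2)
          - mu1 (r2 x2 x1) y2 - mu1 (r2 y2 x1) x2"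
      using FL0[of "(x1,0)" "(0,x2)" "(0,y2)"] by (simp add: FL122 zero_prod_def algebra_simps)
  qed
  have C12: "\<forall>x1 y1 x2. br1 x1 (mu2 x2 y1) - r2 (mu1 y1 x2) x1
          = mu2 (r1 x1 x2) y1 - m1 (r2 x2 x1) y1 + mu2 x2 (br1 x1 y1)"
  proof (intro allI)
    fix x1 y1 x2 show "br1 x1 (mu2 x2 y1) - r2 (mu1 y1 x2) x1
          = mu2 (r1 x1 x2) y1 - m1 (r2 x2 x1) y1 + mu2 x2 (br1 x1 y1)"
      using FL0[of "(x1,0)" "(y1,0)" "(0,x2)"] f1(11)[of y1 "r2 x2 x1"]
      by (simp add: FL112 zero_prod_def algebra_simps)
  qed
  have C13: "\<forall>x2 y2 x1. br2 x2 (mu1 x1 y2) - r1 (mu2 y2 x1) x2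
          = mu1 (r2 x2 x1) y2 - m2 (r1 x1 x2) y2 + mu1 x1 (br2 x2 y2)"
  proof (intro allI)
    fix x2 y2 x1 show "br2 x2 (mu1 x1 y2) - r1 (mu2 y2 x1) x2
          = mu1 (r2 x2 x1) y2 - m2 (r1 x1 x2) y2 + mu1 x1 (br2 x2 y2)"
      using FL0[of "(0,x2)" "(x1,0)" "(0,y2)"] by (simp add: FL212 zero_prod_def algebra_simps)
  qed
  have MD': "malcev (mp_bracket br1 br2 r1 r2)" using MD unfolding D_def .
  have R1: "malcev_rep (*s) (*s) br1 r1" by (rule MR1[OF MD])
  have R2: "malcev_rep (*s) (*s) br2 r2" by (rule MR2[OF MD])
  show ?thesis
    unfolding matched_pair_def mp_rep_def assoc_rep_def
    using replin C1 C2 C3 C4 MD' R1 R2 C83 C84 C93 C94 C10 C11 C12 C13 by blast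
qed

end

theorem mainTheorem2:
  fixes br1 m1 br2 m2 :: "'k::field_char_0 ^ 'n::finite \<Rightarrow> 'k ^ 'n \<Rightarrow> 'k ^ 'n"
  assumes "alg_closed_field TYPE('k)"
    and "malcev_poisson (*s) br1 m1"
    and "malcev_poisson (*s) br2 m2"
  shows "std_manin_triple br1 m1 br2 m2 \<longleftrightarrow>
    matched_pair (*s) (*s) br1 m1 br2 m2
      (dual_rep br1) (\<lambda>x \<xi>. - dual_rep m1 x \<xi>)
      (dual_rep br2) (\<lambda>\<xi> x. - dual_rep m2 \<xi> x)"
proof -
  interpret MP2 br1 m1 br2 m2 using assms(2,3) by unfold_locales
  have eqs: "dual_rep br1 = r1" "(\<lambda>x \<xi>. - dual_rep m1 x \<xi>) = mu1"
    "dual_rep br2 = r2" "(\<lambda>\<xi> x. - dual_rep m2 \<xi> x) = mu2"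
    by (simp_all add: r1_def mu1_def r2_def mu2_def)
  show ?thesis unfolding eqs
  proof
    assume "std_manin_triple br1 m1 br2 m2"
    then obtain br m where H: "malcev_poisson dsc br m"
        "\<forall>x y. br (x, 0) (y, 0) = (br1 x y, 0)" "\<forall>x y. m (x, 0) (y, 0) = (m1 x y, 0)"
        "\<forall>\<xi> \<eta>. br (0, \<xi>) (0, \<eta>) = (0, br2 \<xi> \<eta>)" "\<forall>\<xi> \<eta>. m (0, \<xi>) (0, \<eta>) = (0, m2 \<xi> \<eta>)"
        "\<forall>u v w. omega_d (m u v) w = omega_d u (m v w)"
        "\<forall>u v w. omega_d (br u v) w = omega_d u (br v w)"
      unfolding std_manin_triple_def by blast
    show "matched_pair (*s) (*s) br1 m1 br2 m2 r1 mu1 r2 mu2" by (rule fwd[OF H])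
  next
    assume "matched_pair (*s) (*s) br1 m1 br2 m2 r1 mu1 r2 mu2"
    then show "std_manin_triple br1 m1 br2 m2" by (rule bwd)
  qed
qed

end
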